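(* Let $d\geq 2$ and $U=(u_{ij})_{i,j=1}^d\in\mathcal{U}_d(\mathbb{C})$ be such that $$\min_i\max_j|u_{ij}|^2>\sqrt{\frac{1+\frac{1}{\sqrt d}}{2}}.$$ Then there are no $l\in\{1,\dots,d\}$ and $D_1,D_2\in\mathcal{DU}_d(\mathbb{C})$ such that $D_2U^\dagger D_1U|l\rangle$ is maximally mutually coherent; i.e., Alice and Bob cannot generate a maximally mutually coherent state with just three strokes of the coherence engine.
   Context: $\mathcal{U}_d(\mathbb{C})$ denotes the group of $d\times d$ unitary matrices and $\mathcal{DU}_d(\mathbb{C})$ its subgroup of diagonal unitary matrices; $\{|j\rangle\}$ is the computational basis (Alice's basis) and Bob's basis is $\{U^\dagger|j\rangle\}$. Alice's free operations are $\mathcal{DU}_d(\mathbb{C})$ and Bob's are $\{U^\dagger DU:D\in\mathcal{DU}_d(\mathbb{C})\}$; a three-stroke protocol consists of Alice preparing $|l\rangle$, Bob applying $U^\dagger D_1U$, Alice applying $D_2$. A pure state $|\psi\rangle$ is maximally mutually coherent if $|\langle j|\psi\rangle|=|\langle j|U|\psi\rangle|=1/\sqrt d$ for all $j$. *)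

theory Defs
  imports "HOL-Analysis.Analysis"
begin

text \<open>d x d complex matrices are indexed by a finite type 'n with d = CARD('n).\<close>

definition cadjoint :: "complex^'n^'m \<Rightarrow> complex^'m^'n" where
  "cadjoint A = (\<chi> i j. cnj (A $ j $ i))"

definition unitary_mat :: "complex^'n^'n \<Rightarrow> bool" where
  "unitary_mat U \<longleftrightarrow> cadjoint U ** U = mat 1 \<and> U ** cadjoint U = mat 1"

definition diag_unitary :: "(complex^'n^'n) set" where
  "diag_unitary = {D. unitary_mat D \<and> (\<forall>i j. i \<noteq> j \<longrightarrow> D $ i $ j = 0)}"

definition ket :: "'n::finite \<Rightarrow> complex^'n" where
  "ket l = axis l 1"

text \<open>Maximal mutual coherence w.r.t. Alice's basis {|j>} and Bob's basis {U^dagger |j>}.\<close>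
definition max_mut_coherent :: "complex^'n^'n \<Rightarrow> complex^'n \<Rightarrow> bool" where
  "max_mut_coherent U psi \<longleftrightarrow>
     (\<forall>j. cmod (psi $ j) = 1 / sqrt (real CARD('n))) \<and>
     (\<forall>j. cmod ((U *v psi) $ j) = 1 / sqrt (real CARD('n)))"

end

theory Submission
  imports Defs
begin

lemma sum_single_pt:
  fixes g :: "'n::finite \<Rightarrow> 'a::comm_monoid_add"
  assumes "\<And>k. k \<noteq> i \<Longrightarrow> g k = 0"
  shows "(\<Sum>k\<in>UNIV. g k) = g i"
proof -
  have "(\<Sum>k\<in>UNIV. g k) = g i + (\<Sum>k\<in>UNIV - {i}. g k)"
    by (subst sum.remove[of UNIV i]) auto
  also have "(\<Sum>k\<in>UNIV - {i}. g k) = 0" using assms by (intro sum.neutral) auto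
  finally show ?thesis by simp
qed

lemma diag_unitary_entry:
  assumes "D \<in> diag_unitary"
  shows "cmod (D $ i $ i) = 1" and "\<And>j. j \<noteq> i \<Longrightarrow> D $ i $ j = 0"
proof -
  have off: "\<And>a b. a \<noteq> b \<Longrightarrow> D $ a $ b = 0" using assms by (auto simp: diag_unitary_def)
  then show "\<And>j. j \<noteq> i \<Longrightarrow> D $ i $ j = 0" by auto
  have "(cadjoint D ** D) $ i $ i = 1" using assms
    by (auto simp: diag_unitary_def unitary_mat_def mat_def)
  then have "(\<Sum>k\<in>UNIV. cnj (D $ k $ i) * D $ k $ i) = 1"
    by (simp add: matrix_matrix_mult_def cadjoint_def)
  moreover have "(\<Sum>k\<in>UNIV. cnj (D $ k $ i) * D $ k $ i) = cnj (D $ i $ i) * D $ i $ i"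
    by (rule sum_single_pt) (simp add: off)
  ultimately have "D $ i $ i * cnj (D $ i $ i) = 1" by (simp add: mult.commute)
  then have "complex_of_real ((cmod (D $ i $ i))\<^sup>2) = 1" by (metis complex_norm_square)
  then have "(cmod (D $ i $ i))\<^sup>2 = 1" using of_real_eq_1_iff by blast
  then show "cmod (D $ i $ i) = 1" by (smt (verit) norm_ge_zero power2_eq_1_iff)
qed

lemma col_norm:
  fixes U :: "complex^'n::finite^'n"
  assumes "unitary_mat U"
  shows "(\<Sum>k\<in>UNIV. (cmod (U $ k $ l))\<^sup>2) = 1"
proof -
  have "(cadjoint U ** U) $ l $ l = 1" using assms
    by (auto simp: unitary_mat_def mat_def)
  then have "(\<Sum>k\<in>UNIV. cnj (U $ k $ l) * U $ k $ l) = 1"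
    by (simp add: matrix_matrix_mult_def cadjoint_def)
  moreover have "\<And>k. cnj (U $ k $ l) * U $ k $ l = complex_of_real ((cmod (U $ k $ l))\<^sup>2)"
    by (metis complex_norm_square mult.commute)
  ultimately have "complex_of_real (\<Sum>k\<in>UNIV. (cmod (U $ k $ l))\<^sup>2) = 1" by simp
  then show ?thesis using of_real_eq_1_iff by blast
qed

theorem corollary15:
  fixes U :: "complex^'n::finite^'n"
  assumes "CARD('n) \<ge> 2"
    and "unitary_mat U"
    and "Min (range (\<lambda>i. Max (range (\<lambda>j. (cmod (U $ i $ j))^2))))
           > sqrt ((1 + 1 / sqrt (real CARD('n))) / 2)"
  shows "\<not> (\<exists>l D1 D2. D1 \<in> diag_unitary \<and> D2 \<in> diag_unitary \<and>
             max_mut_coherent U ((D2 ** cadjoint U ** D1 ** U) *v ket l))"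
proof
  assume "\<exists>l D1 D2. D1 \<in> diag_unitary \<and> D2 \<in> diag_unitary \<and>
             max_mut_coherent U ((D2 ** cadjoint U ** D1 ** U) *v ket l)"
  then obtain l D1 D2 where D1: "D1 \<in> diag_unitary" and D2: "D2 \<in> diag_unitary"
    and mmc: "max_mut_coherent U ((D2 ** cadjoint U ** D1 ** U) *v ket l)" by blast
  define a where "a = 1 / sqrt (real CARD('n))"
  define c where "c = sqrt ((1 + a) / 2)"
  have a0: "a > 0" and a1: "a \<le> 1" unfolding a_def using assms(1) by (auto simp: field_simps)
  have cge: "c \<ge> (1 + a) / 2"
  proof -
    have "(1 + a) / 2 \<le> 1" using a1 by simp
    have aa: "a * a \<le> 1" using a0 a1 by (simp add: mult_le_one)
    have "((1 + a) / 2)^2 \<le> (1 + a) / 2" using aa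
      by (simp add: power2_eq_square field_simps algebra_simps)
    then show ?thesis unfolding c_def using real_le_rsqrt by blast
  qed
  have rowbig: "\<forall>i. \<exists>j. (cmod (U $ i $ j))^2 > (1 + a) / 2"
  proof
    fix i
    have le: "Min (range (\<lambda>i. Max (range (\<lambda>j. (cmod (U $ i $ j))^2)))) \<le> Max (range (\<lambda>j. (cmod (U $ i $ j))^2))"
      by (rule Min_le) auto
    have "Max (range (\<lambda>j. (cmod (U $ i $ j))^2)) \<in> range (\<lambda>j. (cmod (U $ i $ j))^2)"
      by (rule Max_in) auto
    then obtain j where "Max (range (\<lambda>j. (cmod (U $ i $ j))^2)) = (cmod (U $ i $ j))^2"
      by (rule rangeE) simp
    with le have "Min (range (\<lambda>i. Max (range (\<lambda>j. (cmod (U $ i $ j))^2)))) \<le> (cmod (U $ i $ j))^2"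
      by simp
    then have "(cmod (U $ i $ j))^2 > c" using assms(3) unfolding c_def a_def by linarith
    then show "\<exists>j. (cmod (U $ i $ j))^2 > (1 + a) / 2" using cge by (intro exI[of _ j]) linarith
  qed
  then obtain \<sigma> where sig: "\<And>i. (cmod (U $ i $ \<sigma> i))^2 > (1 + a) / 2" by metis
  have "inj \<sigma>"
  proof (rule injI, rule ccontr)
    fix x y assume e: "\<sigma> x = \<sigma> y" and ne: "x \<noteq> y"
    have "(\<Sum>k\<in>{x,y}. (cmod (U $ k $ \<sigma> x))\<^sup>2) \<le> (\<Sum>k\<in>UNIV. (cmod (U $ k $ \<sigma> x))\<^sup>2)"
      by (rule sum_mono2) auto
    also have "\<dots> = 1" by (rule col_norm[OF assms(2)])
    finally have "(cmod (U $ x $ \<sigma> x))\<^sup>2 + (cmod (U $ y $ \<sigma> y))\<^sup>2 \<le> 1" using ne e by simp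
    moreover have "(cmod (U $ x $ \<sigma> x))\<^sup>2 > 1/2" "(cmod (U $ y $ \<sigma> y))\<^sup>2 > 1/2"
      using sig[of x] sig[of y] a0 by auto
    ultimately show False by simp
  qed
  then have "surj \<sigma>" by (simp add: finite_UNIV_inj_surj)
  then obtain k where k: "\<sigma> k = l" by (metis surj_f_inv_f)
  define w where "w k' = (cmod (U $ k' $ l))\<^sup>2" for k'
  have wk: "w k > (1 + a) / 2" using sig[of k] k w_def by simp
  have wsum: "(\<Sum>k'\<in>UNIV. w k') = 1" unfolding w_def by (rule col_norm[OF assms(2)])
  define psi where "psi = (D2 ** cadjoint U ** D1 ** U) *v ket l"
  have d1: "\<And>x y. x \<noteq> y \<Longrightarrow> D1 $ x $ y = 0" and d2: "\<And>x y. x \<noteq> y \<Longrightarrow> D2 $ x $ y = 0"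
    using diag_unitary_entry(2)[OF D1] diag_unitary_entry(2)[OF D2] by auto
  have inner: "(cadjoint U ** D1) $ l $ k' = cnj (U $ k' $ l) * D1 $ k' $ k'" for k'
  proof -
    have "(cadjoint U ** D1) $ l $ k' = (\<Sum>m\<in>UNIV. cnj (U $ m $ l) * D1 $ m $ k')"
      by (simp add: matrix_matrix_mult_def cadjoint_def)
    also have "\<dots> = cnj (U $ k' $ l) * D1 $ k' $ k'"
      by (rule sum_single_pt) (simp add: d1)
    finally show ?thesis .
  qed
  have M: "(cadjoint U ** D1 ** U) $ l $ l = (\<Sum>k'\<in>UNIV. of_real (w k') * D1 $ k' $ k')"
  proof -
    have "(cadjoint U ** D1 ** U) $ l $ l = (\<Sum>k'\<in>UNIV. (cadjoint U ** D1) $ l $ k' * U $ k' $ l)"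
      by (simp add: matrix_matrix_mult_def)
    also have "\<dots> = (\<Sum>k'\<in>UNIV. of_real (w k') * D1 $ k' $ k')"
    proof (rule sum.cong[OF refl])
      fix k' have "of_real (w k') = U $ k' $ l * cnj (U $ k' $ l)"
        unfolding w_def by (rule complex_norm_square)
      then show "(cadjoint U ** D1) $ l $ k' * U $ k' $ l = of_real (w k') * D1 $ k' $ k'"
        by (simp add: inner)
    qed
    finally show ?thesis .
  qed
  have psil: "psi $ l = D2 $ l $ l * (\<Sum>k'\<in>UNIV. of_real (w k') * D1 $ k' $ k')"
  proof -
    have "psi $ l = (D2 ** cadjoint U ** D1 ** U) $ l $ l"
      by (simp add: psi_def ket_def matrix_vector_mult_def axis_def if_distrib cong: if_cong)
    also have "(D2 ** cadjoint U ** D1 ** U) = D2 ** (cadjoint U ** D1 ** U)"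
      by (simp add: matrix_mul_assoc)
    also have "(D2 ** (cadjoint U ** D1 ** U)) $ l $ l = (\<Sum>m\<in>UNIV. D2 $ l $ m * (cadjoint U ** D1 ** U) $ m $ l)"
      by (simp add: matrix_matrix_mult_def)
    also have "\<dots> = D2 $ l $ l * (cadjoint U ** D1 ** U) $ l $ l"
      by (rule sum_single_pt) (simp add: d2)
    finally show ?thesis using M by simp
  qed
  define S where "S = (\<Sum>k'\<in>UNIV. of_real (w k') * D1 $ k' $ k')"
  have w0: "w k' \<ge> 0" for k' unfolding w_def by simp
  have "cmod (psi $ l) = cmod S" using psil diag_unitary_entry(1)[OF D2] S_def by (simp add: norm_mult)
  moreover have "cmod (psi $ l) = a" using mmc unfolding psi_def a_def max_mut_coherent_def by simp
  moreover have "cmod S > a"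
  proof -
    have split: "S = of_real (w k) * D1 $ k $ k + (\<Sum>k'\<in>UNIV - {k}. of_real (w k') * D1 $ k' $ k')"
      unfolding S_def by (subst sum.remove[of UNIV k]) auto
    have "cmod (\<Sum>k'\<in>UNIV - {k}. of_real (w k') * D1 $ k' $ k') \<le> (\<Sum>k'\<in>UNIV - {k}. cmod (of_real (w k') * D1 $ k' $ k'))"
      by (rule norm_sum)
    also have "\<dots> = (\<Sum>k'\<in>UNIV - {k}. w k')"
      by (rule sum.cong[OF refl]) (simp add: norm_mult diag_unitary_entry(1)[OF D1] w0)
    also have "\<dots> = 1 - w k" using wsum by (subst (asm) sum.remove[of UNIV k]) auto
    finally have r: "cmod (\<Sum>k'\<in>UNIV - {k}. of_real (w k') * D1 $ k' $ k') \<le> 1 - w k" .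
    have f: "cmod (of_real (w k) * D1 $ k $ k) = w k"
      by (simp add: norm_mult diag_unitary_entry(1)[OF D1] w0)
    have "cmod S \<ge> cmod (of_real (w k) * D1 $ k $ k) - cmod (\<Sum>k'\<in>UNIV - {k}. of_real (w k') * D1 $ k' $ k')"
      unfolding split by (rule norm_diff_ineq)
    then have "cmod S \<ge> 2 * w k - 1" using f r by linarith
    moreover have "2 * w k > 1 + a" using wk by (simp add: field_simps)
    ultimately show ?thesis by linarith
  qed
  ultimately show False by simp
qed

end
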